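(* In the Boosted HiPPA setting of the context, let $\{x^k\}$ and $\{\bar x^k\}$ be generated by the algorithm and let $\bar y^k\in\operatorname{prox}^p_{\gamma\varphi}(x^k)$ satisfy $\|\bar x^k-\bar y^k\|=\operatorname{dist}(\bar x^k,\operatorname{prox}^p_{\gamma\varphi}(x^k))$. If $\sum_{k=0}^\infty\|R^{\varepsilon_k}_\gamma(x^k)\|<\infty$ and $\sum_{k=0}^\infty\|d^k\|<\infty$, then $\{x^k\}$, $\{\bar x^k\}$ and $\{\bar y^k\}$ converge to a common proximal fixed point $\hat x$, i.e., $\hat x\in\operatorname{prox}^p_{\gamma\varphi}(\hat x)$.
   Context: Standing setting. $p>1$; $\varphi:\mathbb{R}^n\to\mathbb{R}\cup\{+\infty\}$ is proper, lsc and bounded from below. For $\gamma>0$: $\operatorname{prox}^p_{\gamma\varphi}(x):=\operatorname{argmin}_y\big(\varphi(y)+\frac1{p\gamma}\|x-y\|^p\big)$, $\varphi^p_\gamma(x):=\inf_y\big(\varphi(y)+\frac1{p\gamma}\|x-y\|^p\big)$. $\{\varepsilon_k\},\{\delta_k\}$ are non-increasing positive sequences with $\sum_k\varepsilon_k<\infty$, $\delta_k\downarrow0$. Prox approximation: for each index $j$ and point $x$ needed, a point $P_j(x)$ (written $\operatorname{prox}^{p,\varepsilon_j}_{\gamma\varphi}(x)$) is available with $\operatorname{dist}(P_j(x),\operatorname{prox}^p_{\gamma\varphi}(x))<\delta_j$ and $\varphi(P_j(x))+\frac1{p\gamma}\|x-P_j(x)\|^p<\varphi^p_\gamma(x)+\varepsilon_j$.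 Define $\varphi^{p,\varepsilon_j}_\gamma(x):=\varphi(P_j(x))+\frac1{p\gamma}\|x-P_j(x)\|^p$, $R^{\varepsilon_j}_\gamma(x):=x-P_j(x)$. Boosted HiPPA: choose $x^0$, $\gamma>0$, $\sigma\in(0,\frac1{p\gamma})$, $\vartheta\in(0,1)$. At iteration $k$: $\bar x^k:=P_k(x^k)$; choose a direction $d^k$; for $m=0,1,\dots$ set $\alpha_k=\vartheta^m$, $\hat x^{k+1}=(1-\alpha_k)\bar x^k+\alpha_k(x^k+d^k)$, until $\varphi^{p,\varepsilon_{k+1}}_\gamma(\hat x^{k+1})\le\varphi^{p,\varepsilon_k}_\gamma(x^k)-\sigma\|R^{\varepsilon_k}_\gamma(x^k)\|^p+\varepsilon_k+\varepsilon_{k+1}$; set $x^{k+1}=\hat x^{k+1}$. *)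

theory Defs
  imports "HOL-Analysis.Analysis"
begin

definition lsc_fun :: "('a::topological_space \<Rightarrow> ereal) \<Rightarrow> bool" where
  "lsc_fun f \<longleftrightarrow> (\<forall>x. f x \<le> Liminf (at x) f)"

definition prox_obj :: "real \<Rightarrow> real \<Rightarrow> ('a::real_normed_vector \<Rightarrow> ereal) \<Rightarrow> 'a \<Rightarrow> 'a \<Rightarrow> ereal" where
  "prox_obj p \<gamma> \<phi> x y = \<phi> y + ereal (norm (x - y) powr p / (p * \<gamma>))"

definition hprox :: "real \<Rightarrow> real \<Rightarrow> ('a::real_normed_vector \<Rightarrow> ereal) \<Rightarrow> 'a \<Rightarrow> 'a set" where
  "hprox p \<gamma> \<phi> x = {y. \<forall>z. prox_obj p \<gamma> \<phi> x y \<le> prox_obj p \<gamma> \<phi> x z}"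

definition hmoreau :: "real \<Rightarrow> real \<Rightarrow> ('a::real_normed_vector \<Rightarrow> ereal) \<Rightarrow> 'a \<Rightarrow> ereal" where
  "hmoreau p \<gamma> \<phi> x = (INF y. prox_obj p \<gamma> \<phi> x y)"

end

theory Submission
  imports Defs
begin

lemma lsc_seq:
  fixes \<phi> :: "'a::metric_space \<Rightarrow> ereal"
  assumes lsc: "lsc_fun \<phi>" and y: "y \<longlonglongrightarrow> a"
    and le: "\<And>k. \<phi> (y k) \<le> ereal (r k)" and r: "r \<longlonglongrightarrow> L"
  shows "\<phi> a \<le> ereal L"
proof (rule ccontr)
  assume "\<not> \<phi> a \<le> ereal L"
  hence lt: "ereal L < \<phi> a" by simp
  then obtain t where t1: "ereal L < t" and t2: "t < \<phi> a" using dense by blast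
  have A: "\<phi> a \<le> Liminf (at a) \<phi>" using lsc unfolding lsc_fun_def by blast
  have "t < Liminf (at a) \<phi>" using t2 A by (rule less_le_trans)
  hence "eventually (\<lambda>z. t < \<phi> z) (at a)"
    using le_Liminf_iff[of "Liminf (at a) \<phi>" "at a" \<phi>] by blast
  then obtain e where e: "e > 0" and he: "\<forall>z\<in>UNIV. z \<noteq> a \<and> dist z a < e \<longrightarrow> t < \<phi> z"
    unfolding eventually_at by blast
  have ball: "t < \<phi> z" if "dist z a < e" for z
  proof (cases "z = a")
    case True thus ?thesis using t2 by (simp only:)
  next
    case False thus ?thesis using he that by blast
  qed
  have ev1: "eventually (\<lambda>k. dist (y k) a < e) sequentially" using y e by (rule tendstoD)
  have "t \<noteq> \<infinity>" using t2 by auto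
  moreover have "t \<noteq> -\<infinity>" using t1 by auto
  ultimately obtain t' where t': "t = ereal t'" by (cases t) auto
  have Lt: "L < t'" using t1 t' by simp
  have ev2: "eventually (\<lambda>k. r k < t') sequentially" using r Lt by (rule order_tendstoD(2))
  have "eventually (\<lambda>k. dist (y k) a < e \<and> r k < t') sequentially"
    using ev1 ev2 by (rule eventually_conj)
  then obtain N where N: "\<forall>n\<ge>N. dist (y n) a < e \<and> r n < t'"
    unfolding eventually_sequentially by blast
  define k where "k = N"
  have k: "dist (y k) a < e \<and> r k < t'" using N unfolding k_def by blast
  have c1: "t < \<phi> (y k)" using ball k by blast
  have c2: "\<phi> (y k) \<le> ereal (r k)" by (rule le)
  have c3: "ereal (r k) < t" using k t' by simp
  have "t < ereal (r k)" using c1 c2 by (rule less_le_trans)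
  with c3 show False using less_asym by blast
qed


theorem theorem11:
  fixes \<phi> :: "'a::euclidean_space \<Rightarrow> ereal"
    and p \<gamma> \<sigma> \<theta> :: real
    and \<epsilon> \<delta> :: "nat \<Rightarrow> real"
    and P :: "nat \<Rightarrow> 'a \<Rightarrow> 'a"
    and x xbar ybar d :: "nat \<Rightarrow> 'a"
    and m :: "nat \<Rightarrow> nat"
  assumes p_gt1: "p > 1"
    and proper: "\<exists>z. \<phi> z \<noteq> \<infinity>"
    and lsc: "lsc_fun \<phi>"
    and bdd_below: "\<exists>c::real. \<forall>z. ereal c \<le> \<phi> z"
    and gamma_pos: "\<gamma> > 0"
    and sigma: "0 < \<sigma>" "\<sigma> < 1 / (p * \<gamma>)"
    and theta: "0 < \<theta>" "\<theta> < 1"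
    and eps_pos: "\<And>k. \<epsilon> k > 0" and eps_dec: "decseq \<epsilon>" and eps_sum: "summable \<epsilon>"
    and delta_pos: "\<And>k. \<delta> k > 0" and delta_dec: "decseq \<delta>" and delta_lim: "\<delta> \<longlonglongrightarrow> 0"
    and P_dist: "\<And>j z. infdist (P j z) (hprox p \<gamma> \<phi> z) < \<delta> j"
    and P_val: "\<And>j z. prox_obj p \<gamma> \<phi> z (P j z) < hmoreau p \<gamma> \<phi> z + ereal (\<epsilon> j)"
    and xbar_def: "\<And>k. xbar k = P k (x k)"
    and step: "\<And>k. x (Suc k) = (1 - \<theta> ^ m k) *\<^sub>R xbar k + \<theta> ^ m k *\<^sub>R (x k + d k)"
    and accept: "\<And>k. prox_obj p \<gamma> \<phi> (x (Suc k)) (P (Suc k) (x (Suc k)))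
        \<le> prox_obj p \<gamma> \<phi> (x k) (P k (x k)) - ereal (\<sigma> * norm (x k - P k (x k)) powr p)
           + ereal (\<epsilon> k + \<epsilon> (Suc k))"
    and first_accept: "\<And>k j. j < m k \<Longrightarrow>
        (let z = (1 - \<theta> ^ j) *\<^sub>R xbar k + \<theta> ^ j *\<^sub>R (x k + d k) in
          \<not> (prox_obj p \<gamma> \<phi> z (P (Suc k) z)
              \<le> prox_obj p \<gamma> \<phi> (x k) (P k (x k)) - ereal (\<sigma> * norm (x k - P k (x k)) powr p)
                 + ereal (\<epsilon> k + \<epsilon> (Suc k))))"
    and ybar_in: "\<And>k. ybar k \<in> hprox p \<gamma> \<phi> (x k)"
    and ybar_dist: "\<And>k. dist (xbar k) (ybar k) = infdist (xbar k) (hprox p \<gamma> \<phi> (x k))"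
    and sum_R: "summable (\<lambda>k. norm (x k - P k (x k)))"
    and sum_d: "summable (\<lambda>k. norm (d k))"
  shows "\<exists>xhat. x \<longlonglongrightarrow> xhat \<and> xbar \<longlonglongrightarrow> xhat \<and> ybar \<longlonglongrightarrow> xhat
          \<and> xhat \<in> hprox p \<gamma> \<phi> xhat"
proof -
  have tpos: "\<And>k. 0 \<le> \<theta> ^ m k" "\<And>k. \<theta> ^ m k \<le> 1" using theta by (auto simp: power_le_one)
  have diff: "x (Suc k) - x k = (1 - \<theta> ^ m k) *\<^sub>R (xbar k - x k) + \<theta> ^ m k *\<^sub>R d k" for k
    using step[of k] by (simp add: algebra_simps)
  have bnd: "norm (x (Suc k) - x k) \<le> norm (x k - P k (x k)) + norm (d k)" for k
  proof -
    have "norm (x (Suc k) - x k) \<le> norm ((1 - \<theta> ^ m k) *\<^sub>R (xbar k - x k)) + norm (\<theta> ^ m k *\<^sub>R d k)"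
      unfolding diff by (rule norm_triangle_ineq)
    also have "\<dots> = (1 - \<theta> ^ m k) * norm (x k - xbar k) + \<theta> ^ m k * norm (d k)"
      using tpos[of k] by (simp add: norm_minus_commute)
    also have "\<dots> \<le> norm (x k - xbar k) + norm (d k)"
      using tpos[of k] by (intro add_mono mult_left_le_one_le) auto
    finally show ?thesis using xbar_def by simp
  qed
  have sn: "summable (\<lambda>k. norm (x (Suc k) - x k))"
    by (rule summable_comparison_test[OF _ summable_add[OF sum_R sum_d]]) (use bnd in auto)
  hence s: "summable (\<lambda>k. x (Suc k) - x k)" by (rule summable_norm_cancel)
  have "(\<lambda>n. x 0 + (\<Sum>i<n. x (Suc i) - x i)) \<longlonglongrightarrow> x 0 + suminf (\<lambda>k. x (Suc k) - x k)"
    by (intro tendsto_add tendsto_const summable_LIMSEQ s)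
  moreover have "(\<lambda>n. x 0 + (\<Sum>i<n. x (Suc i) - x i)) = x"
    by (simp add: sum_lessThan_telescope)
  ultimately obtain xhat where xl: "x \<longlonglongrightarrow> xhat" by auto
  have r0: "(\<lambda>k. x k - xbar k) \<longlonglongrightarrow> 0"
    using summable_LIMSEQ_zero[OF sum_R] unfolding xbar_def[symmetric]
    by (rule tendsto_norm_zero_cancel)
  have xbl: "xbar \<longlonglongrightarrow> xhat"
    using tendsto_diff[OF xl r0] by simp
  have dl: "(\<lambda>k. xbar k - ybar k) \<longlonglongrightarrow> 0"
  proof (rule Lim_null_comparison[OF _ delta_lim])
    show "eventually (\<lambda>k. norm (xbar k - ybar k) \<le> \<delta> k) sequentially"
      using ybar_dist P_dist xbar_def by (simp add: dist_norm less_imp_le)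
  qed
  have ybl: "ybar \<longlonglongrightarrow> xhat"
    using tendsto_diff[OF xbl dl] by simp
  have xy0: "(\<lambda>k. x k - ybar k) \<longlonglongrightarrow> 0"
    using tendsto_diff[OF xl ybl] by simp
  have "xhat \<in> hprox p \<gamma> \<phi> xhat"
    unfolding hprox_def
  proof (safe)
    fix z
    show "prox_obj p \<gamma> \<phi> xhat xhat \<le> prox_obj p \<gamma> \<phi> xhat z"
    proof (cases "\<phi> z = \<infinity>")
      case True thus ?thesis by (simp add: prox_obj_def)
    next
      case False
      obtain c0 where c0: "\<And>z. ereal c0 \<le> \<phi> z" using bdd_below by auto
      obtain c where c: "\<phi> z = ereal c" using False c0[of z] by (cases "\<phi> z") auto
      define a where "a k = norm (x k - ybar k) powr p / (p * \<gamma>)" for k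
      define b where "b k = norm (x k - z) powr p / (p * \<gamma>)" for k
      have ineq: "\<phi> (ybar k) + ereal (a k) \<le> ereal (c + b k)" for k
        proof -
        have "\<forall>z'. prox_obj p \<gamma> \<phi> (x k) (ybar k) \<le> prox_obj p \<gamma> \<phi> (x k) z'"
          using ybar_in[of k] unfolding hprox_def by simp
        hence "prox_obj p \<gamma> \<phi> (x k) (ybar k) \<le> prox_obj p \<gamma> \<phi> (x k) z" by blast
        thus ?thesis unfolding prox_obj_def a_def b_def c by simp
      qed
      have le: "\<phi> (ybar k) \<le> ereal (c + b k - a k)" for k
      proof -
        have "\<phi> (ybar k) \<noteq> -\<infinity>" using c0[of "ybar k"] by auto
        moreover have "\<phi> (ybar k) \<noteq> \<infinity>" using ineq[of k] by auto
        ultimately obtain v where "\<phi> (ybar k) = ereal v" by (cases "\<phi> (ybar k)") auto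
        thus ?thesis using ineq[of k] by simp
      qed
      have al: "a \<longlonglongrightarrow> 0"
      proof -
        have "(\<lambda>k. norm (x k - ybar k) powr p) \<longlonglongrightarrow> 0 powr p"
          using p_gt1 by (intro tendsto_powr' tendsto_norm_zero xy0 tendsto_const) auto
        hence "(\<lambda>k. norm (x k - ybar k) powr p / (p * \<gamma>)) \<longlonglongrightarrow> 0 powr p / (p * \<gamma>)"
          by (intro tendsto_divide tendsto_const) (use p_gt1 gamma_pos in auto)
        thus ?thesis unfolding a_def by simp
      qed
      have bl: "b \<longlonglongrightarrow> norm (xhat - z) powr p / (p * \<gamma>)"
        unfolding b_def using p_gt1 gamma_pos
        by (intro tendsto_divide tendsto_const tendsto_powr' tendsto_norm tendsto_diff xl) auto
      have "\<phi> xhat \<le> ereal (c + norm (xhat - z) powr p / (p * \<gamma>) - 0)"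
        by (rule lsc_seq[OF lsc ybl le]) (intro tendsto_diff tendsto_add tendsto_const bl al)
      thus ?thesis using c p_gt1 by (simp add: prox_obj_def)
    qed
  qed
  thus ?thesis using xl xbl ybl by blast
qed

end
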